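(* Consider the single-hop VAoI system described in the context, operated under the threshold policy with threshold $\Delta_T\in\{0,1,2,\dots\}$. Then the average VAoI is \[ \bar\Delta_{(\Delta_T)}=\frac12\,\frac{(\Delta_T-1)\Delta_T\,p_s}{(\Delta_T-1)p_s+\beta}+\frac{p_g}{p_s}, \] where $\beta=1-(1-p_s)(1-p_g)$.
   Context: Time is slotted, $t\in\{0,1,2,\dots\}$. An information source generates a new version in each slot independently with probability $p_g$; let $G_t\in\{0,1\}$ indicate whether a new version is generated in slot $t$. A transmitter holding the current source version may, in each slot $t$, attempt to send it to a receiver over an erasure channel; $a(t)\in\{0,1\}$ indicates an attempt, and each attempt succeeds independently with probability $p_s$. The Version Age of Information (VAoI) $\Delta(t)$ evolves as $\Delta(t+1)=G_t$ if $a(t)=1$ and the attempt succeeds, and $\Delta(t+1)=\Delta(t)+G_t$ otherwise. All version-generation and channel events are mutually independent. Assume $0<p_s<1$, $0<p_g<1$. The threshold policy with threshold $\Delta_T$ sets $a(t)=1$ iff $\Delta(t)\ge\Delta_T$. The average VAoI is $\bar\Delta_{(\Delta_T)}=\lim_{t\to\infty}\mathbb{E}[\Delta(t)]=\sum_{n\ge0}n\mu_n$, where $(\mu_n)$ is the stationary distribution of the (ergodic) Markov chain $\Delta(t)$. *)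

theory Defs
  imports Complex_Main
begin

text \<open>One-step transition probability of the VAoI Markov chain under the threshold
  policy with threshold T: from state n an attempt is made iff n \<ge> T.
  With an attempt: success (prob ps) leads to state G_t (0 w.p. 1-pg, 1 w.p. pg);
  failure (prob 1-ps) leads to n + G_t.  Without attempt: n + G_t.\<close>
definition vaoi_trans :: "real \<Rightarrow> real \<Rightarrow> nat \<Rightarrow> nat \<Rightarrow> nat \<Rightarrow> real" where
  "vaoi_trans ps pg T n m =
     (if T \<le> n then ps * ((if m = 0 then 1 - pg else 0) + (if m = 1 then pg else 0)) else 0)
     + (if T \<le> n then 1 - ps else 1)
       * ((if m = n then 1 - pg else 0) + (if m = Suc n then pg else 0))"

definition vaoi_stationary :: "real \<Rightarrow> real \<Rightarrow> nat \<Rightarrow> (nat \<Rightarrow> real) \<Rightarrow> bool" where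
  "vaoi_stationary ps pg T mu \<longleftrightarrow>
     (\<forall>n. 0 \<le> mu n) \<and> mu sums 1 \<and>
     (\<forall>m. (\<lambda>n. mu n * vaoi_trans ps pg T n m) sums mu m)"

end

theory Submission
  imports Defs
begin

lemma bal:
  fixes ps pg :: real and T :: nat and mu :: "nat \<Rightarrow> real"
  assumes st: "vaoi_stationary ps pg T mu"
  shows "mu m = ps*((if m=0 then 1-pg else 0)+(if m=1 then pg else 0))*(\<Sum>n. if T\<le>n then mu n else 0)
     + (if T\<le>m then 1-ps else 1)*(1-pg)*mu m
     + (if 0<m then (if T\<le>m-1 then 1-ps else 1)*pg*mu(m-1) else 0)"
proof -
  have nn: "\<And>n. 0 \<le> mu n" and s1: "mu sums 1"
    and sm: "(\<lambda>n. mu n * vaoi_trans ps pg T n m) sums mu m"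
    using st unfolding vaoi_stationary_def by auto
  define S where "S = (\<Sum>n. if T\<le>n then mu n else 0)"
  have "summable (\<lambda>n. if T\<le>n then mu n else 0)"
    by (rule summable_comparison_test[of _ mu]) (use nn s1 in \<open>auto simp: sums_iff\<close>)
  hence sS: "(\<lambda>n. if T\<le>n then mu n else 0) sums S" unfolding S_def by (rule summable_sums)
  define c0 where "c0 = ps*((if m=0 then 1-pg else 0)+(if m=1 then pg else 0))"
  define A where "A n = (if T\<le>n then 1-ps else 1)*(1-pg)*mu n" for n
  define B where "B n = (if 0<m then (if T\<le>n then 1-ps else 1)*pg*mu n else 0)" for n
  have eq: "(\<lambda>n. mu n * vaoi_trans ps pg T n m) =
     (\<lambda>n. c0 * (if T\<le>n then mu n else 0) + (if n = m then A n else 0) + (if n = m-1 then B n else 0))"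
  proof
    fix n
    show "mu n * vaoi_trans ps pg T n m =
       c0 * (if T\<le>n then mu n else 0) + (if n = m then A n else 0) + (if n = m-1 then B n else 0)"
      unfolding vaoi_trans_def c0_def A_def B_def
      by (cases "T \<le> n"; cases "m = n"; cases "m = Suc n"; cases "m = 0"; cases "m = 1")
         (auto simp: algebra_simps)
  qed
  have "(\<lambda>n. c0 * (if T\<le>n then mu n else 0) + (if n = m then A n else 0) + (if n = m-1 then B n else 0))
      sums (c0 * S + A m + B (m-1))"
    by (intro sums_add sums_mult sS sums_single)
  with sm eq have "mu m = c0 * S + A m + B (m-1)" using sums_unique2 by metis
  thus ?thesis unfolding c0_def A_def B_def S_def by simp
qed


lemma geo_tail:
  fixes mu :: "nat \<Rightarrow> real"
  assumes "\<And>j. mu (K + Suc j) = r * mu (K + j)"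
  shows "mu (K + j) = mu K * r ^ j"
proof (induction j)
  case 0 then show ?case by simp
next
  case (Suc j)
  have "mu (K + Suc j) = r * mu (K + j)" by (rule assms)
  then show ?case using Suc by simp
qed

lemma tail_sums:
  fixes r c :: real
  assumes "0 \<le> r" "r < 1"
  shows "(\<lambda>j. real (j + K) * (c * r ^ j)) sums (c * (1/(1-r)^2 + (real K - 1) / (1 - r)))"
proof -
  have "(\<lambda>j. c * (real (Suc j) * r ^ j + (real K - 1) * r ^ j)) sums (c * (1/(1-r)^2 + (real K - 1) * (1 / (1 - r))))"
    using assms by (intro sums_mult sums_add geometric_deriv_sums geometric_sums) auto
  moreover have "(\<lambda>j. c * (real (Suc j) * r ^ j + (real K - 1) * r ^ j)) = (\<lambda>j. real (j + K) * (c * r ^ j))"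
    by (auto simp: algebra_simps)
  ultimately show ?thesis by simp
qed

theorem lemma2:
  fixes ps pg :: real and T :: nat and mu :: "nat \<Rightarrow> real"
  assumes "0 < ps" "ps < 1" "0 < pg" "pg < 1"
    and "vaoi_stationary ps pg T mu"
  shows "(\<lambda>n. real n * mu n) sums
           (1/2 * ((real T - 1) * real T * ps / ((real T - 1) * ps + (1 - (1 - ps) * (1 - pg))))
            + pg / ps)"
proof -
  note st = assms(5)
  have nn: "\<And>n. 0 \<le> mu n" and s1: "mu sums 1"
    using st unfolding vaoi_stationary_def by auto
  define S where "S = (\<Sum>n. if T\<le>n then mu n else 0)"
  define b where "b = 1 - (1 - ps) * (1 - pg)"
  define r where "r = pg * (1 - ps) / b"
  have bpos: "b > 0"
  proof -
    have "b = ps + pg * (1 - ps)" unfolding b_def by algebra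
    moreover have "pg * (1 - ps) \<ge> 0" using assms(2,3) by simp
    ultimately show ?thesis using assms(1) by linarith
  qed
  have bps: "b - pg * (1 - ps) = ps" unfolding b_def by (simp add: algebra_simps)
  have r0: "0 \<le> r" unfolding r_def using assms(1-4) bpos by simp
  have r1: "r < 1" unfolding r_def using bpos bps assms(1) by (simp add: divide_simps)
  have omr: "1 - r = ps / b" unfolding r_def using bpos bps by (simp add: field_simps)
  have E: "\<And>m. mu m = ps*((if m=0 then 1-pg else 0)+(if m=1 then pg else 0))*S
     + (if T\<le>m then 1-ps else 1)*(1-pg)*mu m
     + (if 0<m then (if T\<le>m-1 then 1-ps else 1)*pg*mu(m-1) else 0)"
    unfolding S_def by (rule bal[OF st])
  show ?thesis
  proof (cases "T = 0")
    case True
    have "S = 1" unfolding S_def True using s1 by (simp add: sums_iff)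
    have m0: "mu 0 = ps * (1 - pg) / b"
      using E[of 0] \<open>S = 1\<close> True bpos unfolding b_def by (simp add: field_simps)
    have m1: "mu 1 = ps * pg / b^2"
    proof -
      have "mu 1 = ps * pg + (1-ps)*(1-pg)*mu 1 + (1-ps)*pg*mu 0"
        using E[of 1] \<open>S = 1\<close> True by simp
      hence "b * mu 1 = ps * pg + (1-ps)*pg*mu 0" unfolding b_def by algebra
      hence "b * mu 1 = ps * pg + (1-ps)*pg*(ps * (1 - pg) / b)" using m0 by simp
      hence "b * mu 1 * b = ps * pg * b + (1-ps)*pg*ps * (1 - pg)" using bpos by (simp add: field_simps)
      hence "b * mu 1 * b = ps * pg" unfolding b_def by algebra
      thus ?thesis using bpos by (simp add: field_simps power2_eq_square)
    qed
    have rec: "mu (1 + Suc j) = r * mu (1 + j)" for j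
    proof -
      have "mu (Suc (Suc j)) = (1-ps)*(1-pg)*mu (Suc (Suc j)) + (1-ps)*pg*mu (Suc j)"
        using E[of "Suc (Suc j)"] True by simp
      hence "b * mu (Suc (Suc j)) = (1-ps)*pg*mu (Suc j)" unfolding b_def by algebra
      thus ?thesis unfolding r_def using bpos by (simp add: field_simps)
    qed
    have tl: "mu (j + 1) = mu 1 * r ^ j" for j using geo_tail[where K=1 and r=r and mu=mu, OF rec] by (metis add.commute)
    have fe: "(\<lambda>j. real (j + 1) * mu (j + 1)) = (\<lambda>j. real (j + 1) * (mu 1 * r ^ j))"
      by (simp only: tl)
    have "(\<lambda>j. real (j + 1) * (mu 1 * r ^ j)) sums (mu 1 * (1/(1-r)^2 + (real 1 - 1) / (1 - r)))"
      by (rule tail_sums[OF r0 r1])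
    hence "(\<lambda>j. real (j + 1) * mu (j + 1)) sums (mu 1 * (1/(1-r)^2))" unfolding fe by simp
    hence "(\<lambda>n. real n * mu n) sums (mu 1 * (1/(1-r)^2))"
      using sums_iff_shift[of "\<lambda>n. real n * mu n" 1] by simp
    moreover have "mu 1 * (1/(1-r)^2) = pg / ps"
    proof -
      have h: "1/(1-r)^2 = b^2/ps^2" using omr by (simp add: power_divide)
      have "mu 1 * (1/(1-r)^2) = (ps*pg/b^2) * (b^2/ps^2)" by (simp only: m1 h)
      also have "\<dots> = pg/ps" using bpos assms(1) by (simp add: field_simps power2_eq_square)
      finally show ?thesis .
    qed
    ultimately show ?thesis using True by simp
  next
    case False
    hence T1: "T \<ge> 1" by simp
    define a where "a = ps * S / pg"
    have m0: "mu 0 = ps * (1 - pg) * S / pg"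
    proof -
      have "mu 0 = ps * (1-pg) * S + (1-pg) * mu 0" using E[of 0] T1 by simp
      thus ?thesis using assms(3) by (simp add: field_simps)
    qed
    have mid: "mu n = a" if "1 \<le> n" "n < T" for n
      using that
    proof (induction n)
      case 0 then show ?case by simp
    next
      case (Suc k)
      show ?case
      proof (cases "k = 0")
        case True
        have "mu 1 = ps * pg * S + (1-pg) * mu 1 + pg * mu 0" using E[of 1] Suc.prems True by simp
        hence "pg * mu 1 = ps * pg * S + pg * mu 0" by algebra
        hence "pg * mu 1 = ps * pg * S + ps * (1 - pg) * S" using m0 assms(3) by simp
        hence "pg * mu 1 = ps * S" by algebra
        thus ?thesis using True assms(3) unfolding a_def by (simp add: field_simps)
      next
        case False
        have "mu (Suc k) = (1-pg) * mu (Suc k) + pg * mu k" using E[of "Suc k"] Suc.prems False by simp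
        hence "pg * mu (Suc k) = pg * mu k" by algebra
        hence "mu (Suc k) = mu k" using assms(3) by simp
        thus ?thesis using Suc.IH Suc.prems False by simp
      qed
    qed
    have mT: "mu T = ps * S / b"
    proof (cases "T = 1")
      case True
      have "mu 1 = ps * pg * S + (1-ps)*(1-pg) * mu 1 + pg * mu 0" using E[of 1] True by simp
      hence "b * mu 1 = ps * pg * S + pg * mu 0" unfolding b_def by algebra
      hence "b * mu 1 = ps * pg * S + ps * (1 - pg) * S" using m0 assms(3) by simp
      hence "b * mu 1 = ps * S" by algebra
      thus ?thesis using True bpos by (simp add: field_simps)
    next
      case False
      have "mu T = (1-ps)*(1-pg) * mu T + pg * mu (T - 1)" proof -
        have "\<not> T \<le> T - 1" using T1 by simp
        thus ?thesis using E[of T] False T1 by simp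
      qed
      moreover have "mu (T - 1) = a" using mid[of "T-1"] False T1 by simp
      ultimately have "b * mu T = pg * a" unfolding b_def by algebra
      hence "b * mu T = ps * S" unfolding a_def using assms(3) by simp
      thus ?thesis using bpos by (simp add: field_simps)
    qed
    have rec: "mu (T + Suc j) = r * mu (T + j)" for j
    proof -
      have "mu (T + Suc j) = (1-ps)*(1-pg)*mu (T + Suc j) + (1-ps)*pg*mu (T + j)"
        using E[of "T + Suc j"] T1 by simp
      hence "b * mu (T + Suc j) = (1-ps)*pg*mu (T + j)" unfolding b_def by algebra
      thus ?thesis unfolding r_def using bpos by (simp add: field_simps)
    qed
    have tl: "mu (j + T) = ps * S / b * r ^ j" for j
      using geo_tail[where K=T and r=r and mu=mu, OF rec] mT by (metis add.commute)
    have fe: "(\<lambda>j. real (j + T) * mu (j + T)) = (\<lambda>j. real (j + T) * (ps * S / b * r ^ j))"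
      by (simp only: tl)
    have fe2: "(\<lambda>j. mu (j + T)) = (\<lambda>j. ps * S / b * r ^ j)"
      by (simp only: tl)
    have fin1: "(\<Sum>i<k. mu i) = mu 0 + (real k - 1) * a" if "1 \<le> k" "k \<le> T" for k
      using that
    proof (induction k)
      case 0 then show ?case by simp
    next
      case (Suc k)
      show ?case
      proof (cases "k = 0")
        case True then show ?thesis by simp
      next
        case False
        then show ?thesis using Suc mid[of k] by (simp add: algebra_simps)
      qed
    qed
    have fin2: "(\<Sum>i<k. real i * mu i) = a * ((real k - 1) * real k / 2)" if "1 \<le> k" "k \<le> T" for k
      using that
    proof (induction k)
      case 0 then show ?case by simp
    next
      case (Suc k)
      show ?case
      proof (cases "k = 0")
        case True then show ?thesis by simp
      next
        case False
        then show ?thesis using Suc mid[of k] by (simp add: algebra_simps)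
      qed
    qed
    have "(\<lambda>j. real (j + T) * (ps * S / b * r ^ j)) sums (ps * S / b * (1/(1-r)^2 + (real T - 1) / (1 - r)))"
      by (rule tail_sums[OF r0 r1])
    hence mean_tail: "(\<lambda>j. real (j + T) * mu (j + T)) sums (ps * S / b * (1/(1-r)^2 + (real T - 1) / (1 - r)))"
      unfolding fe .
    have "(\<lambda>j. mu (j + T)) sums (ps * S / b * (1 / (1 - r)))"
      unfolding fe2 using r0 r1 by (intro sums_mult geometric_sums) auto
    hence "(\<lambda>j. mu (j + T)) sums S" using omr bpos assms(1) by (simp add: field_simps)
    hence "mu sums (S + (\<Sum>i<T. mu i))" by (simp only: sums_iff_shift)
    hence n1: "1 = S + (\<Sum>i<T. mu i)" by (rule sums_unique2[OF s1])
    have f1: "(\<Sum>i<T. mu i) = mu 0 + (real T - 1) * a" by (rule fin1[OF T1 order_refl])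
    have norm: "1 = S + ps * (1 - pg) * S / pg + (real T - 1) * (ps * S / pg)"
      using n1 unfolding f1 m0 a_def by linarith
    define D where "D = real T * ps - ps * pg + pg"
    have Dpos: "D > 0"
    proof -
      have "real T * ps \<ge> 1 * ps" using T1 assms(1) by (intro mult_right_mono) auto
      moreover have "ps * pg < ps * 1" using assms(1,4) by (intro mult_strict_left_mono) auto
      ultimately show ?thesis unfolding D_def using assms(3) by linarith
    qed
    have SD: "S = pg / D"
    proof -
      have "pg = S * D" using norm assms(3) unfolding D_def by (simp add: field_simps)
      thus ?thesis using Dpos by (simp add: field_simps)
    qed
    from mean_tail have "(\<lambda>n. real n * mu n) sums
        (ps * S / b * (1/(1-r)^2 + (real T - 1) / (1 - r)) + a * ((real T - 1) * real T / 2))"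
      using sums_iff_shift[of "\<lambda>n. real n * mu n" T] fin2[of T] T1 by simp
    moreover have "ps * S / b * (1/(1-r)^2 + (real T - 1) / (1 - r)) + a * ((real T - 1) * real T / 2)
       = (1/2 * ((real T - 1) * real T * ps / ((real T - 1) * ps + (1 - (1 - ps) * (1 - pg)))) + pg / ps)"
    proof -
      have den: "(real T - 1) * ps + (1 - (1 - ps) * (1 - pg)) = D" unfolding D_def by algebra
      have "ps * S / b * (1/(1-r)^2 + (real T - 1) / (1 - r)) = ps * S / b * (1/(ps/b)^2 + (real T - 1) / (ps/b))"
        by (simp only: omr)
      also have "\<dots> = S * (b / ps + real T - 1)"
        using bpos assms(1) by (simp add: field_simps power2_eq_square)
      also have "\<dots> = pg / ps"
      proof -
        have "b + ps * (real T - 1) = D" unfolding D_def b_def by algebra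
        thus ?thesis unfolding SD using Dpos assms(1) by (simp add: field_simps)
      qed
      finally have 1: "ps * S / b * (1/(1-r)^2 + (real T - 1) / (1 - r)) = pg / ps" .
      have 2: "a * ((real T - 1) * real T / 2) = 1/2 * ((real T - 1) * real T * ps / D)"
        unfolding a_def SD using Dpos assms(3) by (simp add: field_simps)
      show ?thesis unfolding den 1 2 by simp
    qed
    ultimately show ?thesis by simp
  qed
qed

end
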